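(* Let $\gamma>-1/2$ and for $a\in\mathbb{R}$ define \[ T(a)={}_1F_1(1+\gamma;2\gamma+1;-ia)\,{}_1F_1(2+\gamma;2\gamma+2;ia)(1+\gamma)-{}_1F_1(\gamma;2\gamma+1;-ia)\,{}_1F_1(1+\gamma;2\gamma+2;ia)\,\gamma . \] Then $T(a)\neq0$ for every $a\in\mathbb{R}$.
   Context: ${}_1F_1(\alpha;\beta;z)=\sum_{k\ge0}\frac{(\alpha)_k}{(\beta)_k}\frac{z^k}{k!}$ is the confluent hypergeometric function, with $(v)_k$ the rising factorial. *)

theory Defs
  imports "HOL-Analysis.Analysis"
begin

definition hyp1F1 :: "complex \<Rightarrow> complex \<Rightarrow> complex \<Rightarrow> complex" where
  "hyp1F1 \<alpha> \<beta> z = (\<Sum>k. pochhammer \<alpha> k / pochhammer \<beta> k * z ^ k / fact k)"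

end

theory Submission
  imports Defs
begin


definition cf :: "real \<Rightarrow> real \<Rightarrow> nat \<Rightarrow> real" where
  "cf A B n = pochhammer A n / pochhammer B n / fact n"

definition FF :: "real \<Rightarrow> real \<Rightarrow> complex \<Rightarrow> complex" where
  "FF A B z = (\<Sum>n. complex_of_real (cf A B n) * z ^ n)"

lemma hyp_FF: "hyp1F1 (of_real A) (of_real B) z = FF A B z"
  unfolding hyp1F1_def FF_def cf_def
  by (simp add: pochhammer_of_real)

lemma cf_Suc: "B > 0 \<Longrightarrow> cf A B (Suc n) = cf A B n * (A + n) / ((B + n) * (n + 1))"
proof -
  assume B: "B > 0"
  have "pochhammer B n > 0" using B by (rule pochhammer_pos)
  moreover have "B + n > 0" using B by simp
  ultimately show ?thesis
    unfolding cf_def by (simp add: pochhammer_rec' field_simps)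
qed

lemma summable_FF:
  assumes B: "B > 0"
  shows "summable (\<lambda>n. complex_of_real (cf A B n) * z ^ n)"
proof (rule summable_ratio_test[where c = "1/2"])
  define K where "K = \<bar>A\<bar> / B + 1"
  have K: "K > 0" using B by (simp add: K_def add_nonneg_pos)
  define N where "N = nat \<lceil>2 * K * norm z\<rceil>"
  show "(1/2::real) < 1" by simp
  fix n assume n: "N \<le> n"
  have nN: "2 * K * norm z \<le> real n + 1"
    using n unfolding N_def by linarith
  have r1: "\<bar>A + real n\<bar> / (B + real n) \<le> K"
  proof -
    have "\<bar>A + real n\<bar> \<le> \<bar>A\<bar> + real n" by simp
    also have "\<dots> \<le> (\<bar>A\<bar> / B + 1) * (B + real n)"
      using B by (simp add: field_simps)
    finally show ?thesis using B by (simp add: K_def divide_le_eq)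
  qed
  have "norm (complex_of_real (cf A B (Suc n)) * z ^ Suc n)
      = \<bar>cf A B n\<bar> * norm z ^ n * ((\<bar>A + real n\<bar> / (B + real n)) * norm z / (real n + 1))"
  proof -
    have "norm (complex_of_real (cf A B (Suc n)) * z ^ Suc n) = \<bar>cf A B (Suc n)\<bar> * norm z ^ Suc n"
      by (simp add: norm_mult norm_power)
    also have "\<bar>cf A B (Suc n)\<bar> = \<bar>cf A B n\<bar> * \<bar>A + real n\<bar> / ((B + real n) * (real n + 1))"
      using B by (simp add: cf_Suc[OF B] abs_mult abs_divide)
    finally show ?thesis using B by (simp add: field_simps)
  qed
  also have "\<dots> \<le> \<bar>cf A B n\<bar> * norm z ^ n * (1/2)"
  proof (rule mult_left_mono)
    have "(\<bar>A + real n\<bar> / (B + real n)) * norm z \<le> K * norm z"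
      by (rule mult_right_mono[OF r1]) simp
    also have "\<dots> \<le> (real n + 1) / 2" using nN by simp
    finally have xle: "(\<bar>A + real n\<bar> / (B + real n)) * norm z \<le> (real n + 1) / 2" .
    have h: "\<And>x d::real. 0 < d \<Longrightarrow> x \<le> d / 2 \<Longrightarrow> x / d \<le> 1/2"
      by (simp add: divide_le_eq)
    show "(\<bar>A + real n\<bar> / (B + real n)) * norm z / (real n + 1) \<le> 1/2"
      by (rule h[OF _ xle]) simp
  qed simp
  also have "\<dots> = 1/2 * norm (complex_of_real (cf A B n) * z ^ n)"
    by (simp add: norm_mult norm_power)
  finally show "norm (complex_of_real (cf A B (Suc n)) * z ^ Suc n) \<le> 1/2 * norm (complex_of_real (cf A B n) * z ^ n)" .
qed

lemma sums_FF: "B > 0 \<Longrightarrow> (\<lambda>n. complex_of_real (cf A B n) * z ^ n) sums FF A B z"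
  unfolding FF_def by (rule summable_sums[OF summable_FF])

lemma sums_shift:
  fixes c :: "nat \<Rightarrow> complex"
  assumes "(\<lambda>n. c n * z ^ n) sums s"
  shows "(\<lambda>n. (if n = 0 then 0 else c (n - 1)) * z ^ n) sums (z * s)"
proof -
  have "(\<lambda>n. z * (c n * z ^ n)) sums (z * s)" by (rule sums_mult[OF assms])
  hence "(\<lambda>n. (if Suc n = 0 then 0 else c (Suc n - 1)) * z ^ Suc n) sums (z * s)"
    by (simp add: algebra_simps)
  hence "(\<lambda>n. (if n = 0 then 0 else c (n - 1)) * z ^ n) sums (z * s + (if 0 = (0::nat) then 0 else c (0 - 1)) * z ^ 0)"
    by (rule sums_Suc)
  thus ?thesis by simp
qed

lemma FF_0: "FF A B 0 = 1"
  unfolding FF_def using powser_zero[of "\<lambda>n. complex_of_real (cf A B n)"]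
  by (simp add: cf_def)


lemma poch_facts:
  fixes A :: real
  shows "pochhammer A (Suc m) = A * pochhammer (A + 1) m"
    and "pochhammer (A + 1) (Suc m) = (A + 1 + real m) * pochhammer (A + 1) m"
    and "(A + 1) * pochhammer (A + 2) m = (A + 1 + real m) * pochhammer (A + 1) m"
    and "pochhammer (A + 2) (Suc m) = (A + 2 + real m) * pochhammer (A + 2) m"
proof -
  show "pochhammer A (Suc m) = A * pochhammer (A + 1) m" by (rule pochhammer_rec)
  show "pochhammer (A + 1) (Suc m) = (A + 1 + real m) * pochhammer (A + 1) m"
    by (simp add: pochhammer_rec')
  have "pochhammer (A + 1) (Suc m) = (A + 1) * pochhammer (A + 1 + 1) m" by (rule pochhammer_rec)
  thus "(A + 1) * pochhammer (A + 2) m = (A + 1 + real m) * pochhammer (A + 1) m"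
    by (simp add: pochhammer_rec' add.assoc)
  show "pochhammer (A + 2) (Suc m) = (A + 2 + real m) * pochhammer (A + 2) m"
    by (simp add: pochhammer_rec')
qed

lemma c1: "B > 0 \<Longrightarrow> real (Suc n) * cf A B (Suc n) = A / B * cf (A + 1) (B + 1) n"
proof -
  assume B: "B > 0"
  have Y: "pochhammer (B + 1) n > 0" using B by (intro pochhammer_pos) simp
  define k where "k = real n + 1"
  have k: "k > 0" "real (Suc n) = k" "fact (Suc n) = k * (fact n :: real)"
    by (simp_all add: k_def)
  have F: "fact n > (0::real)" by simp
  show ?thesis unfolding cf_def poch_facts(1)[of A] poch_facts(1)[of B] k
    using B Y k F by (simp add: field_simps)
qed

lemma c3: "B > 0 \<Longrightarrow> cf (A + 1) B (Suc m) = cf A B (Suc m) + cf (A + 1) (B + 1) m / B"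
proof -
  assume B: "B > 0"
  have Y: "pochhammer (B + 1) m > 0" using B by (intro pochhammer_pos) simp
  define k where "k = real m + 1"
  have k: "k > 0" "fact (Suc m) = k * (fact m :: real)" "A + 1 + real m = A + k"
    by (simp_all add: k_def)
  have F: "fact m > (0::real)" by simp
  show ?thesis unfolding cf_def poch_facts(1)[of A] poch_facts(1)[of B] poch_facts(2)[of A] k
    using B Y k F by (simp add: field_simps)
qed

lemma c2: "B > 0 \<Longrightarrow> real (Suc m) * cf (A + 1) (B + 1) (Suc m)
   = B * cf A B (Suc m) - B * cf (A + 1) (B + 1) (Suc m) + cf (A + 1) (B + 1) m"
proof -
  assume B: "B > 0"
  have Y: "pochhammer (B + 1) m > 0" using B by (intro pochhammer_pos) simp
  define k where "k = real m + 1"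
  define l where "l = B + 1 + real m"
  have k: "k > 0" "real (Suc m) = k" "fact (Suc m) = k * (fact m :: real)" "A + 1 + real m = A + k"
    "B + 1 + real m = l" "l > 0"
    using B by (simp_all add: k_def l_def)
  have lk: "l = B + k" by (simp add: k_def l_def)
  have F: "fact m > (0::real)" by simp
  show ?thesis unfolding cf_def poch_facts(1)[of A] poch_facts(1)[of B] poch_facts(2)[of A]
    poch_facts(2)[of B] k
    using B Y k F by (simp add: field_simps) (simp add: algebra_simps lk)
qed

lemma c4: "A > -1/2 \<Longrightarrow> B = 2 * A + 1 \<Longrightarrow> (1 + A) * cf (A + 2) (B + 1) (Suc m)
   = B * cf A B (Suc m) - A * cf (A + 1) (B + 1) (Suc m) + cf (A + 1) (B + 1) m"
proof -
  assume A: "A > -1/2" and Bd: "B = 2 * A + 1"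
  have B: "B > 0" using A Bd by simp
  have Y: "pochhammer (B + 1) m > 0" using B by (intro pochhammer_pos) simp
  have A1: "A + 1 > 0" using A by simp
  define k where "k = real m + 1"
  define l where "l = B + 1 + real m"
  have k: "k > 0" "fact (Suc m) = k * (fact m :: real)" "A + 1 + real m = A + k"
    "B + 1 + real m = l" "l > 0" "A + 2 + real m = A + 1 + k"
    using B Bd by (simp_all add: k_def l_def)
  have lk: "l = 2 * A + 1 + k" by (simp add: k_def l_def Bd)
  have F: "fact m > (0::real)" by simp
  have P2: "pochhammer (A + 2) m = (A + k) * pochhammer (A + 1) m / (A + 1)"
    using poch_facts(3)[of A m] A1 unfolding k(3) by (simp add: field_simps)
  define X where "X = pochhammer (A + 1) m"
  define Yv where "Yv = pochhammer (B + 1) m"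
  define Fv where "Fv = (fact m :: real)"
  have e1: "cf A B (Suc m) = A * X / (B * Yv) / (k * Fv)"
    unfolding cf_def X_def Yv_def Fv_def poch_facts(1)[of A] poch_facts(1)[of B] k(2) by simp
  have e2: "cf (A + 1) (B + 1) (Suc m) = (A + k) * X / (l * Yv) / (k * Fv)"
    unfolding cf_def X_def Yv_def Fv_def poch_facts(2)[of A] poch_facts(2)[of B] k(2,3,4) by simp
  define a1 where "a1 = A + 1"
  have a1: "a1 > 0" using A1 by (simp add: a1_def)
  have e3: "cf (A + 2) (B + 1) (Suc m) = (A + 1 + k) * ((A + k) * X / a1) / (l * Yv) / (k * Fv)"
    unfolding cf_def X_def Yv_def Fv_def poch_facts(4)[of A] P2 poch_facts(2)[of B] k(2,4,6) a1_def by simp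
  have e4: "cf (A + 1) (B + 1) m = X / Yv / Fv"
    unfolding cf_def X_def Yv_def Fv_def by simp
  have pos: "Yv > 0" "Fv > 0" using Y F by (simp_all add: Yv_def Fv_def)
  show ?thesis unfolding e1 e2 e3 e4
    using pos k(1,5) a1 B by (simp add: field_simps) (simp add: algebra_simps lk Bd a1_def)
qed


lemma FF_deriv:
  assumes B: "B > 0"
  shows "(FF A B has_field_derivative (complex_of_real (A / B) * FF (A + 1) (B + 1) z)) (at z)"
proof -
  have d: "((\<lambda>z. \<Sum>n. complex_of_real (cf A B n) * z ^ n) has_field_derivative
      (\<Sum>n. diffs (\<lambda>n. complex_of_real (cf A B n)) n * z ^ n)) (at z)"
    by (rule termdiffs_strong_converges_everywhere) (rule summable_FF[OF B])
  have "(\<lambda>n. diffs (\<lambda>n. complex_of_real (cf A B n)) n * z ^ n)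
      = (\<lambda>n. complex_of_real (A / B) * (complex_of_real (cf (A + 1) (B + 1) n) * z ^ n))"
  proof
    fix n
    have "complex_of_real (real (Suc n) * cf A B (Suc n)) = complex_of_real (A / B * cf (A + 1) (B + 1) n)"
      using c1[OF B] by simp
    thus "diffs (\<lambda>n. complex_of_real (cf A B n)) n * z ^ n
      = complex_of_real (A / B) * (complex_of_real (cf (A + 1) (B + 1) n) * z ^ n)"
      unfolding diffs_def by simp
  qed
  moreover have "(\<Sum>n. complex_of_real (A / B) * (complex_of_real (cf (A + 1) (B + 1) n) * z ^ n))
     = complex_of_real (A / B) * FF (A + 1) (B + 1) z"
    unfolding FF_def by (rule suminf_mult) (rule summable_FF, use B in simp)
  ultimately show ?thesis using d unfolding FF_def[abs_def] by simp
qed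

lemma S3:
  assumes B: "B > 0"
  shows "FF (A + 1) B z = FF A B z + z * FF (A + 1) (B + 1) z / complex_of_real B"
proof -
  have s: "(\<lambda>n. complex_of_real (cf A B n) * z ^ n
     + (if n = 0 then 0 else complex_of_real (cf (A + 1) (B + 1) (n - 1))) * z ^ n / complex_of_real B)
     sums (FF A B z + z * FF (A + 1) (B + 1) z / complex_of_real B)"
    by (intro sums_add sums_divide sums_FF B sums_shift) (use B in simp)
  have "(\<lambda>n. complex_of_real (cf A B n) * z ^ n
     + (if n = 0 then 0 else complex_of_real (cf (A + 1) (B + 1) (n - 1))) * z ^ n / complex_of_real B)
     = (\<lambda>n. complex_of_real (cf (A + 1) B n) * z ^ n)"
  proof
    fix n show "complex_of_real (cf A B n) * z ^ n
     + (if n = 0 then 0 else complex_of_real (cf (A + 1) (B + 1) (n - 1))) * z ^ n / complex_of_real B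
     = complex_of_real (cf (A + 1) B n) * z ^ n"
    proof (cases n)
      case 0 thus ?thesis by (simp add: cf_def)
    next
      case (Suc m)
      have "complex_of_real (cf (A + 1) B (Suc m)) = complex_of_real (cf A B (Suc m) + cf (A + 1) (B + 1) m / B)"
        using c3[OF B] by simp
      thus ?thesis using Suc by (simp add: field_simps)
    qed
  qed
  with s have "(\<lambda>n. complex_of_real (cf (A + 1) B n) * z ^ n) sums (FF A B z + z * FF (A + 1) (B + 1) z / complex_of_real B)"
    by simp
  from sums_unique2[OF sums_FF[OF B] this] show ?thesis .
qed


lemma S4:
  assumes A: "A > -1/2" and Bd: "B = 2 * A + 1"
  shows "complex_of_real (1 + A) * FF (A + 2) (B + 1) z
     = complex_of_real B * FF A B z - complex_of_real A * FF (A + 1) (B + 1) z + z * FF (A + 1) (B + 1) z"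
proof -
  have B: "B > 0" using A Bd by simp
  have s: "(\<lambda>n. complex_of_real B * (complex_of_real (cf A B n) * z ^ n)
     - complex_of_real A * (complex_of_real (cf (A + 1) (B + 1) n) * z ^ n)
     + (if n = 0 then 0 else complex_of_real (cf (A + 1) (B + 1) (n - 1))) * z ^ n)
     sums (complex_of_real B * FF A B z - complex_of_real A * FF (A + 1) (B + 1) z + z * FF (A + 1) (B + 1) z)"
    by (intro sums_add sums_diff sums_mult sums_FF B sums_shift) (use B in simp_all)
  have s2: "(\<lambda>n. complex_of_real (1 + A) * (complex_of_real (cf (A + 2) (B + 1) n) * z ^ n))
     sums (complex_of_real (1 + A) * FF (A + 2) (B + 1) z)"
    by (intro sums_mult sums_FF) (use B in simp)
  have "(\<lambda>n. complex_of_real B * (complex_of_real (cf A B n) * z ^ n)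
     - complex_of_real A * (complex_of_real (cf (A + 1) (B + 1) n) * z ^ n)
     + (if n = 0 then 0 else complex_of_real (cf (A + 1) (B + 1) (n - 1))) * z ^ n)
     = (\<lambda>n. complex_of_real (1 + A) * (complex_of_real (cf (A + 2) (B + 1) n) * z ^ n))"
  proof
    fix n show "complex_of_real B * (complex_of_real (cf A B n) * z ^ n)
     - complex_of_real A * (complex_of_real (cf (A + 1) (B + 1) n) * z ^ n)
     + (if n = 0 then 0 else complex_of_real (cf (A + 1) (B + 1) (n - 1))) * z ^ n
     = complex_of_real (1 + A) * (complex_of_real (cf (A + 2) (B + 1) n) * z ^ n)"
    proof (cases n)
      case 0 thus ?thesis by (simp add: cf_def Bd)
    next
      case (Suc m)
      have h: "complex_of_real (1 + A) * complex_of_real (cf (A + 2) (B + 1) (Suc m))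
         = complex_of_real B * complex_of_real (cf A B (Suc m)) - complex_of_real A * complex_of_real (cf (A + 1) (B + 1) (Suc m)) + complex_of_real (cf (A + 1) (B + 1) m)"
        using arg_cong[OF c4[OF A Bd, of m], of complex_of_real] by simp
      have "complex_of_real (1 + A) * (complex_of_real (cf (A + 2) (B + 1) n) * z ^ n)
         = (complex_of_real (1 + A) * complex_of_real (cf (A + 2) (B + 1) (Suc m))) * z ^ n"
        using Suc by (simp add: mult.assoc)
      also have "\<dots> = (complex_of_real B * complex_of_real (cf A B (Suc m)) - complex_of_real A * complex_of_real (cf (A + 1) (B + 1) (Suc m)) + complex_of_real (cf (A + 1) (B + 1) m)) * z ^ n"
        by (simp only: h)
      finally show ?thesis using Suc by (simp add: algebra_simps)
    qed
  qed
  with s have "(\<lambda>n. complex_of_real (1 + A) * (complex_of_real (cf (A + 2) (B + 1) n) * z ^ n))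
     sums (complex_of_real B * FF A B z - complex_of_real A * FF (A + 1) (B + 1) z + z * FF (A + 1) (B + 1) z)"
    by simp
  from sums_unique2[OF s2 this] show ?thesis .
qed

lemma S2:
  assumes B: "B > 0"
  shows "z * (complex_of_real ((A + 1) / (B + 1)) * FF (A + 1 + 1) (B + 1 + 1) z)
     = complex_of_real B * FF A B z - complex_of_real B * FF (A + 1) (B + 1) z + z * FF (A + 1) (B + 1) z"
proof -
  have s: "(\<lambda>n. complex_of_real B * (complex_of_real (cf A B n) * z ^ n)
     - complex_of_real B * (complex_of_real (cf (A + 1) (B + 1) n) * z ^ n)
     + (if n = 0 then 0 else complex_of_real (cf (A + 1) (B + 1) (n - 1))) * z ^ n)
     sums (complex_of_real B * FF A B z - complex_of_real B * FF (A + 1) (B + 1) z + z * FF (A + 1) (B + 1) z)"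
    by (intro sums_add sums_diff sums_mult sums_FF B sums_shift) (use B in simp_all)
  have s1: "(\<lambda>n. (complex_of_real ((A + 1) / (B + 1)) * complex_of_real (cf (A + 1 + 1) (B + 1 + 1) n)) * z ^ n)
     sums (complex_of_real ((A + 1) / (B + 1)) * FF (A + 1 + 1) (B + 1 + 1) z)"
    using sums_mult[OF sums_FF[of "B + 1 + 1" "A + 1 + 1" z], of "complex_of_real ((A + 1) / (B + 1))"] B
    by (simp add: mult.assoc)
  note s2 = sums_shift[OF s1]
  have "(\<lambda>n. complex_of_real B * (complex_of_real (cf A B n) * z ^ n)
     - complex_of_real B * (complex_of_real (cf (A + 1) (B + 1) n) * z ^ n)
     + (if n = 0 then 0 else complex_of_real (cf (A + 1) (B + 1) (n - 1))) * z ^ n)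
     = (\<lambda>n. (if n = 0 then 0 else complex_of_real ((A + 1) / (B + 1)) * complex_of_real (cf (A + 1 + 1) (B + 1 + 1) (n - 1))) * z ^ n)"
  proof
    fix n show "complex_of_real B * (complex_of_real (cf A B n) * z ^ n)
     - complex_of_real B * (complex_of_real (cf (A + 1) (B + 1) n) * z ^ n)
     + (if n = 0 then 0 else complex_of_real (cf (A + 1) (B + 1) (n - 1))) * z ^ n
     = (if n = 0 then 0 else complex_of_real ((A + 1) / (B + 1)) * complex_of_real (cf (A + 1 + 1) (B + 1 + 1) (n - 1))) * z ^ n"
    proof (cases n)
      case 0 thus ?thesis by (simp add: cf_def)
    next
      case (Suc m)
      have B1: "B + 1 > 0" using B by simp
      have h: "complex_of_real ((A + 1) / (B + 1)) * complex_of_real (cf (A + 1 + 1) (B + 1 + 1) m)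
         = complex_of_real B * complex_of_real (cf A B (Suc m)) - complex_of_real B * complex_of_real (cf (A + 1) (B + 1) (Suc m)) + complex_of_real (cf (A + 1) (B + 1) m)"
        using arg_cong[OF c1[OF B1, where n=m and A="A+1"], of complex_of_real]
          arg_cong[OF c2[OF B, where A=A and m=m], of complex_of_real] by simp
      have "(if n = 0 then 0 else complex_of_real ((A + 1) / (B + 1)) * complex_of_real (cf (A + 1 + 1) (B + 1 + 1) (n - 1))) * z ^ n
         = (complex_of_real ((A + 1) / (B + 1)) * complex_of_real (cf (A + 1 + 1) (B + 1 + 1) m)) * z ^ n"
        using Suc by simp
      also have "\<dots> = (complex_of_real B * complex_of_real (cf A B (Suc m)) - complex_of_real B * complex_of_real (cf (A + 1) (B + 1) (Suc m)) + complex_of_real (cf (A + 1) (B + 1) m)) * z ^ n"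
        by (simp only: h)
      finally show ?thesis using Suc by (simp add: algebra_simps)
    qed
  qed
  with s have "(\<lambda>n. (if n = 0 then 0 else complex_of_real ((A + 1) / (B + 1)) * complex_of_real (cf (A + 1 + 1) (B + 1 + 1) (n - 1))) * z ^ n)
     sums (complex_of_real B * FF A B z - complex_of_real B * FF (A + 1) (B + 1) z + z * FF (A + 1) (B + 1) z)"
    by simp
  from sums_unique2[OF s2 this] show ?thesis .
qed

lemma FF_cnj: "B > 0 \<Longrightarrow> cnj (FF A B z) = FF A B (cnj z)"
proof -
  assume B: "B > 0"
  have "(\<lambda>n. cnj (complex_of_real (cf A B n) * z ^ n)) sums cnj (FF A B z)"
    using sums_FF[OF B] by (simp only: sums_cnj)
  hence "(\<lambda>n. complex_of_real (cf A B n) * cnj z ^ n) sums cnj (FF A B z)" by simp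
  from sums_unique2[OF sums_FF[OF B] this] show ?thesis by simp
qed


lemma keyE:
  fixes q r d q' r' d' s b g :: complex
  assumes s: "s \<noteq> 0" and b: "b \<noteq> 0" and bg: "b = 2 * g + 1"
    and d: "d = (b * q - b * r + (\<i> * s) * r) / (\<i> * s)"
    and d': "d' = (b * q' - b * r' + (- \<i> * s) * r') / (- \<i> * s)"
  shows "s * ((- \<i> * ((g / b) * r') + (- \<i>) * r' / b + (- \<i> * s) * (- \<i> * d') / b) * (b * q + (\<i> * s - g) * r)
      + (q' + (- \<i> * s) * r' / b) * (b * (\<i> * ((g / b) * r)) + \<i> * r + (\<i> * s - g) * (\<i> * d))
      - g * ((- \<i> * ((g / b) * r')) * r + q' * (\<i> * d)))
    + b * ((q' + (- \<i> * s) * r' / b) * (b * q + (\<i> * s - g) * r) - g * q' * r)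
    = b * q * q' + \<i> * s * (q' * r - (q + \<i> * s * r / b) * r')"
  using s b unfolding d d'
  by (simp add: field_simps) (simp add: algebra_simps power2_eq_square bg)

lemma keyK:
  fixes q r d q' r' d' s b g :: complex
  assumes s: "s \<noteq> 0" and b: "b \<noteq> 0" and bg: "b = 2 * g + 1"
    and d: "d = (b * q - b * r + (\<i> * s) * r) / (\<i> * s)"
    and d': "d' = (b * q' - b * r' + (- \<i> * s) * r') / (- \<i> * s)"
  shows "s * ((- \<i> * ((g / b) * r')) * r + q' * (\<i> * d)
      - (\<i> * ((g / b) * r) + \<i> * r / b + (\<i> * s) * (\<i> * d) / b) * r' - (q + (\<i> * s) * r / b) * (- \<i> * d'))
    + b * (q' * r - (q + (\<i> * s) * r / b) * r') = 0"
  using s b unfolding d d'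
  by (simp add: field_simps) (simp add: algebra_simps power2_eq_square bg)


lemma RePow:
  fixes F F' :: "complex \<Rightarrow> complex"
  assumes d: "\<And>s. (F has_field_derivative F' s) (at s)" and x: "x > 0"
  shows "((\<lambda>x. x powr b * Re (F (of_real x))) has_real_derivative
           (x powr (b - 1) * Re (of_real b * F (of_real x) + of_real x * F' (of_real x)))) (at x)"
proof -
  have v: "((\<lambda>x. F (of_real x)) has_vector_derivative F' (of_real x)) (at x)"
    by (rule has_vector_derivative_real_field[OF d])
  have r: "((\<lambda>x. Re (F (of_real x))) has_field_derivative Re (F' (of_real x))) (at x)"
    by (rule has_field_derivative_Re[OF v])
  have p: "((\<lambda>x. x powr b) has_real_derivative b * x powr (b - 1)) (at x)"
    by (rule has_real_derivative_powr) (use x in simp)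
  have e: "x powr b = x powr (b - 1) * x" using x by (simp add: powr_diff)
  show ?thesis
    by (rule DERIV_cong[OF DERIV_mult[OF p r]]) (simp add: e algebra_simps)
qed

lemma contPow:
  fixes F F' :: "complex \<Rightarrow> complex"
  assumes d: "\<And>s. (F has_field_derivative F' s) (at s)" and b: "b > 0"
  shows "continuous_on {0..a} (\<lambda>x. x powr b * Re (F (of_real x)))"
proof -
  have cF: "continuous_on UNIV F"
    by (intro continuous_at_imp_continuous_on ballI DERIV_isCont[OF d])
  have "continuous_on {0..a} (\<lambda>x::real. F (of_real x))"
    by (rule continuous_on_compose2[OF cF]) (auto intro: continuous_intros)
  hence c2: "continuous_on {0..a} (\<lambda>x::real. Re (F (of_real x)))"
    by (intro continuous_intros)
  have c1: "continuous_on {0..a} (\<lambda>x::real. x powr b)"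
    by (rule continuous_on_powr') (use b in \<open>auto intro: continuous_intros\<close>)
  show ?thesis by (intro continuous_on_mult c1 c2)
qed

lemma zeroRe:
  fixes F F' :: "complex \<Rightarrow> complex"
  assumes d: "\<And>s. (F has_field_derivative F' s) (at s)" and b: "b > 0" and a: "a > 0"
    and z: "\<And>x. x > 0 \<Longrightarrow> Re (of_real b * F (of_real x) + of_real x * F' (of_real x)) = 0"
  shows "Re (F (of_real a)) = 0"
proof -
  have "(\<lambda>x. x powr b * Re (F (of_real x))) a = (\<lambda>x. x powr b * Re (F (of_real x))) 0"
  proof (rule DERIV_isconst_end[OF a contPow[OF d b]])
    fix x :: real assume "0 < x" "x < a"
    from RePow[OF d \<open>0 < x\<close>, of b] show "((\<lambda>x. x powr b * Re (F (of_real x))) has_real_derivative 0) (at x)"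
      using z[OF \<open>0 < x\<close>] by simp
  qed
  hence "a powr b * Re (F (of_real a)) = 0" by simp
  moreover have "a powr b > 0" using a by simp
  ultimately show ?thesis by simp
qed

lemma zeroC:
  fixes F F' :: "complex \<Rightarrow> complex"
  assumes d: "\<And>s. (F has_field_derivative F' s) (at s)" and b: "b > 0" and a: "a > 0"
    and z: "\<And>x. x > 0 \<Longrightarrow> of_real b * F (of_real x) + of_real x * F' (of_real x) = 0"
  shows "F (of_real a) = 0"
proof -
  have 1: "Re (F (of_real a)) = 0"
    by (rule zeroRe[OF d b a]) (simp add: z)
  have d2: "\<And>s. ((\<lambda>s. - \<i> * F s) has_field_derivative (- \<i> * F' s)) (at s)"
    by (intro DERIV_cmult d)
  have "Re (- \<i> * F (of_real a)) = 0"
  proof (rule zeroRe[OF d2 b a])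
    fix x :: real assume "x > 0"
    have "of_real b * (- \<i> * F (of_real x)) + of_real x * (- \<i> * F' (of_real x))
       = - \<i> * (of_real b * F (of_real x) + of_real x * F' (of_real x))" by (simp add: algebra_simps)
    thus "Re (of_real b * (- \<i> * F (of_real x)) + of_real x * (- \<i> * F' (of_real x))) = 0"
      using z[OF \<open>x > 0\<close>] by simp
  qed
  hence 2: "Im (F (of_real a)) = 0" by simp
  from 1 2 show ?thesis by (simp add: complex_eq_iff)
qed


theorem lemma2p3:
  fixes \<gamma> :: real and a :: real
  assumes "\<gamma> > - 1 / 2"
  shows "hyp1F1 (1 + of_real \<gamma>) (2 * of_real \<gamma> + 1) (- \<i> * of_real a)
           * hyp1F1 (2 + of_real \<gamma>) (2 * of_real \<gamma> + 2) (\<i> * of_real a) * (1 + of_real \<gamma>)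
         - hyp1F1 (of_real \<gamma>) (2 * of_real \<gamma> + 1) (- \<i> * of_real a)
           * hyp1F1 (1 + of_real \<gamma>) (2 * of_real \<gamma> + 2) (\<i> * of_real a) * of_real \<gamma> \<noteq> 0"
proof -
  define b where "b = 2 * \<gamma> + 1"
  have b: "b > 0" using assms by (simp add: b_def)
  have b1: "b + 1 > 0" using b by simp
  define bc where "bc = complex_of_real b"
  define gc where "gc = complex_of_real \<gamma>"
  have bc0: "bc \<noteq> 0" using b by (simp add: bc_def)
  have bg: "bc = 2 * gc + 1" by (simp add: bc_def gc_def b_def)
  define Q where "Q = FF \<gamma> b"
  define Q2 where "Q2 = FF (\<gamma> + 1) (b + 1)"
  define D2 where "D2 = (\<lambda>z. complex_of_real ((\<gamma> + 1) / (b + 1)) * FF (\<gamma> + 1 + 1) (b + 1 + 1) z)"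
  have dQ: "\<And>z. (Q has_field_derivative (gc / bc * Q2 z)) (at z)"
    using FF_deriv[OF b, of \<gamma>] by (simp add: Q_def Q2_def gc_def bc_def)
  have dQ2: "\<And>z. (Q2 has_field_derivative D2 z) (at z)"
    using FF_deriv[OF b1, of "\<gamma> + 1"] by (simp add: Q2_def D2_def)
  have D2e: "\<And>z. z \<noteq> 0 \<Longrightarrow> D2 z = (bc * Q z - bc * Q2 z + z * Q2 z) / z"
  proof -
    fix z :: complex assume z: "z \<noteq> 0"
    have "z * D2 z = bc * Q z - bc * Q2 z + z * Q2 z"
      using S2[OF b, of z \<gamma>] by (simp add: D2_def Q_def Q2_def bc_def)
    thus "D2 z = (bc * Q z - bc * Q2 z + z * Q2 z) / z" using z by (simp add: field_simps)
  qed
  have cQ: "\<And>f f' s D. (f has_field_derivative f') (at s) \<Longrightarrow> D = gc / bc * Q2 (f s) * f'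
      \<Longrightarrow> ((\<lambda>s. Q (f s)) has_field_derivative D) (at s)"
    using DERIV_chain2[OF dQ] by blast
  have cQ2: "\<And>f f' s D. (f has_field_derivative f') (at s) \<Longrightarrow> D = D2 (f s) * f'
      \<Longrightarrow> ((\<lambda>s. Q2 (f s)) has_field_derivative D) (at s)"
    using DERIV_chain2[OF dQ2] by blast
  define Kf where "Kf = (\<lambda>s. Q (- \<i> * s) * Q2 (\<i> * s) - (Q (\<i> * s) + (\<i> * s) * Q2 (\<i> * s) / bc) * Q2 (- \<i> * s))"
  define Kf' where "Kf' = (\<lambda>s. (- \<i> * ((gc / bc) * Q2 (- \<i> * s))) * Q2 (\<i> * s) + Q (- \<i> * s) * (\<i> * D2 (\<i> * s))
      - (\<i> * ((gc / bc) * Q2 (\<i> * s)) + \<i> * Q2 (\<i> * s) / bc + (\<i> * s) * (\<i> * D2 (\<i> * s)) / bc) * Q2 (- \<i> * s)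
      - (Q (\<i> * s) + (\<i> * s) * Q2 (\<i> * s) / bc) * (- \<i> * D2 (- \<i> * s)))"
  have dK: "\<And>s. (Kf has_field_derivative Kf' s) (at s)"
    unfolding Kf_def Kf'_def
    apply (rule derivative_eq_intros cQ cQ2 refl | simp add: bc0)+
    apply (simp add: field_simps bc0)
    done
  have K0: "\<And>x. x > 0 \<Longrightarrow> Kf (of_real x) = 0"
  proof (rule zeroC[OF dK b])
    fix x :: real assume x: "x > 0"
    have xs: "complex_of_real x \<noteq> 0" using x by simp
    have e1: "D2 (\<i> * of_real x) = (bc * Q (\<i> * of_real x) - bc * Q2 (\<i> * of_real x) + (\<i> * of_real x) * Q2 (\<i> * of_real x)) / (\<i> * of_real x)"
      by (rule D2e) (use xs in simp)
    have e2: "D2 (- \<i> * of_real x) = (bc * Q (- \<i> * of_real x) - bc * Q2 (- \<i> * of_real x) + (- \<i> * of_real x) * Q2 (- \<i> * of_real x)) / (- \<i> * of_real x)"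
      by (rule D2e) (use xs in simp)
    have "of_real x * Kf' (of_real x) + bc * Kf (of_real x) = 0"
      unfolding Kf_def Kf'_def
      by (rule keyK[OF xs bc0 bg e1 e2])
    thus "complex_of_real b * Kf (complex_of_real x) + complex_of_real x * Kf' (complex_of_real x) = 0"
      by (simp add: bc_def algebra_simps)
  qed
  define Ef where "Ef = (\<lambda>s. (Q (- \<i> * s) + (- \<i> * s) * Q2 (- \<i> * s) / bc) * (bc * Q (\<i> * s) + (\<i> * s - gc) * Q2 (\<i> * s))
      - gc * Q (- \<i> * s) * Q2 (\<i> * s))"
  define Ef' where "Ef' = (\<lambda>s. (- \<i> * ((gc / bc) * Q2 (- \<i> * s)) + (- \<i>) * Q2 (- \<i> * s) / bc + (- \<i> * s) * (- \<i> * D2 (- \<i> * s)) / bc) * (bc * Q (\<i> * s) + (\<i> * s - gc) * Q2 (\<i> * s))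
      + (Q (- \<i> * s) + (- \<i> * s) * Q2 (- \<i> * s) / bc) * (bc * (\<i> * ((gc / bc) * Q2 (\<i> * s))) + \<i> * Q2 (\<i> * s) + (\<i> * s - gc) * (\<i> * D2 (\<i> * s)))
      - gc * ((- \<i> * ((gc / bc) * Q2 (- \<i> * s))) * Q2 (\<i> * s) + Q (- \<i> * s) * (\<i> * D2 (\<i> * s))))"
  have dE: "\<And>s. (Ef has_field_derivative Ef' s) (at s)"
    unfolding Ef_def Ef'_def
    apply (rule derivative_eq_intros cQ cQ2 refl | simp add: bc0)+
    apply (simp add: field_simps bc0)
    done
  have Qc: "\<And>x::real. Q (- \<i> * of_real x) = cnj (Q (\<i> * of_real x))"
    unfolding Q_def using FF_cnj[OF b] by simp
  have E1: "\<And>x. x > 0 \<Longrightarrow> complex_of_real b * Ef (of_real x) + of_real x * Ef' (of_real x)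
      = complex_of_real (b * (norm (Q (\<i> * of_real x)))\<^sup>2)"
  proof -
    fix x :: real assume x: "x > 0"
    have xs: "complex_of_real x \<noteq> 0" using x by simp
    have e1: "D2 (\<i> * of_real x) = (bc * Q (\<i> * of_real x) - bc * Q2 (\<i> * of_real x) + (\<i> * of_real x) * Q2 (\<i> * of_real x)) / (\<i> * of_real x)"
      by (rule D2e) (use xs in simp)
    have e2: "D2 (- \<i> * of_real x) = (bc * Q (- \<i> * of_real x) - bc * Q2 (- \<i> * of_real x) + (- \<i> * of_real x) * Q2 (- \<i> * of_real x)) / (- \<i> * of_real x)"
      by (rule D2e) (use xs in simp)
    have "of_real x * Ef' (of_real x) + bc * Ef (of_real x) = bc * Q (\<i> * of_real x) * Q (- \<i> * of_real x)
        + \<i> * of_real x * Kf (of_real x)"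
      unfolding Ef_def Ef'_def Kf_def
      by (rule keyE[OF xs bc0 bg e1 e2])
    also have "\<dots> = bc * (Q (\<i> * of_real x) * cnj (Q (\<i> * of_real x)))"
      using K0[OF x] Qc[of x] by simp
    also have "\<dots> = complex_of_real (b * (norm (Q (\<i> * of_real x)))\<^sup>2)"
      by (simp add: bc_def flip: complex_norm_square)
    finally show "complex_of_real b * Ef (of_real x) + of_real x * Ef' (of_real x)
      = complex_of_real (b * (norm (Q (\<i> * of_real x)))\<^sup>2)"
      by (simp add: bc_def algebra_simps)
  qed
  define psi where "psi = (\<lambda>x::real. x powr b * Re (Ef (of_real x)))"
  have dpsi: "\<And>x. x > 0 \<Longrightarrow> (psi has_real_derivative (x powr (b - 1) * (b * (norm (Q (\<i> * of_real x)))\<^sup>2))) (at x)"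
  proof -
    fix x :: real assume x: "x > 0"
    show "(psi has_real_derivative (x powr (b - 1) * (b * (norm (Q (\<i> * of_real x)))\<^sup>2))) (at x)"
      using RePow[OF dE x, of b] E1[OF x] unfolding psi_def by simp
  qed
  have cpsi: "\<And>u. continuous_on {0..u} psi" unfolding psi_def by (rule contPow[OF dE b])
  have Q0: "Q 0 = 1" unfolding Q_def by (rule FF_0)
  have icQ: "isCont (\<lambda>x::real. Q (\<i> * of_real x)) 0"
    by (rule isCont_o2[where f="\<lambda>x::real. \<i> * of_real x" and a=0 and g=Q]) (auto intro!: continuous_intros DERIV_isCont[OF dQ])
  then obtain \<delta> where d0: "\<delta> > 0" and dl: "\<And>x'. dist x' 0 < \<delta> \<Longrightarrow> dist (Q (\<i> * of_real x')) (Q (\<i> * of_real 0)) < 1"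
    unfolding continuous_at_eps_delta by (meson zero_less_one)
  have Qnz: "\<And>x. \<bar>x\<bar> < \<delta> \<Longrightarrow> Q (\<i> * of_real x) \<noteq> 0"
  proof
    fix x :: real assume "\<bar>x\<bar> < \<delta>" "Q (\<i> * of_real x) = 0"
    with dl[of x] Q0 show False by simp
  qed
  have pos: "\<And>x. x > 0 \<Longrightarrow> Re (Ef (of_real x)) > 0"
  proof -
    fix x :: real assume x: "x > 0"
    define a1 where "a1 = min x (\<delta> / 2)"
    have a1: "a1 > 0" "a1 \<le> x" "a1 < \<delta>" using x d0 by (auto simp: a1_def)
    have "psi 0 < psi a1"
    proof (rule DERIV_pos_imp_increasing_open[OF a1(1) _ cpsi])
      fix y :: real assume y: "0 < y" "y < a1"
      have "Q (\<i> * of_real y) \<noteq> 0" using y a1 by (intro Qnz) simp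
      hence "y powr (b - 1) * (b * (norm (Q (\<i> * of_real y)))\<^sup>2) > 0" using y b by simp
      with dpsi[OF y(1)] show "\<exists>l. (psi has_real_derivative l) (at y) \<and> 0 < l" by blast
    qed
    also have "psi a1 \<le> psi x"
    proof (rule DERIV_nonneg_imp_increasing_open[OF a1(2)])
      fix y :: real assume y: "a1 < y" "y < x"
      hence y0: "y > 0" using a1 by simp
      have "y powr (b - 1) * (b * (norm (Q (\<i> * of_real y)))\<^sup>2) \<ge> 0" using y0 b by simp
      with dpsi[OF y0] show "\<exists>l. (psi has_real_derivative l) (at y) \<and> 0 \<le> l" by blast
    next
      show "continuous_on {a1..x} psi" by (rule continuous_on_subset[OF cpsi[of x]]) (use a1 in auto)
    qed
    finally have "psi x > 0" by (simp add: psi_def)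
    hence "x powr b * Re (Ef (of_real x)) > 0" by (simp add: psi_def)
    moreover have "x powr b > 0" using x by simp
    ultimately show "Re (Ef (of_real x)) > 0" by (simp add: zero_less_mult_iff)
  qed
  have Ecnj: "\<And>x::real. Ef (of_real (- x)) = cnj (Ef (of_real x))"
  proof -
    fix x :: real
    have q1: "Q (\<i> * of_real (- x)) = cnj (Q (\<i> * of_real x))" using Qc[of x] by simp
    have q2: "Q (- \<i> * of_real (- x)) = cnj (Q (- \<i> * of_real x))" using Qc[of x] by simp
    have r1: "Q2 (- \<i> * of_real x) = cnj (Q2 (\<i> * of_real x))"
      unfolding Q2_def using FF_cnj[OF b1] by simp
    have r2: "Q2 (\<i> * of_real (- x)) = cnj (Q2 (\<i> * of_real x))" using r1 by simp
    have r3: "Q2 (- \<i> * of_real (- x)) = cnj (Q2 (- \<i> * of_real x))" using r1 by simp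
    show "Ef (of_real (- x)) = cnj (Ef (of_real x))"
      unfolding Ef_def using q1 q2 r2 r3 by (simp add: bc_def gc_def)
  qed
  have E0: "Ef 0 = 1" unfolding Ef_def using Q0 
    by (simp add: Q2_def FF_0 bg)
  have p1: "1 + complex_of_real \<gamma> = complex_of_real (\<gamma> + 1)" by simp
  have p2: "2 * complex_of_real \<gamma> + 1 = complex_of_real b" by (simp add: b_def)
  have p3: "2 + complex_of_real \<gamma> = complex_of_real (\<gamma> + 2)" by simp
  have p4: "2 * complex_of_real \<gamma> + 2 = complex_of_real (b + 1)" by (simp add: b_def)
  have h1: "\<And>w. hyp1F1 (1 + of_real \<gamma>) (2 * of_real \<gamma> + 1) w = Q w + w * Q2 w / bc"
    unfolding p1 p2 hyp_FF using S3[OF b] by (simp add: Q_def Q2_def bc_def)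
  have h2: "\<And>z. hyp1F1 (2 + of_real \<gamma>) (2 * of_real \<gamma> + 2) z * (1 + of_real \<gamma>) = bc * Q z - gc * Q2 z + z * Q2 z"
    unfolding p3 p4 hyp_FF using S4[OF assms b_def] by (simp add: Q_def Q2_def bc_def gc_def mult.commute)
  have h3: "\<And>w. hyp1F1 (of_real \<gamma>) (2 * of_real \<gamma> + 1) w = Q w"
    unfolding p2 hyp_FF by (simp add: Q_def)
  have h4: "\<And>z. hyp1F1 (1 + of_real \<gamma>) (2 * of_real \<gamma> + 2) z = Q2 z"
    unfolding p1 p4 hyp_FF by (simp add: Q2_def)
  have T: "hyp1F1 (1 + of_real \<gamma>) (2 * of_real \<gamma> + 1) (- \<i> * of_real a)
           * hyp1F1 (2 + of_real \<gamma>) (2 * of_real \<gamma> + 2) (\<i> * of_real a) * (1 + of_real \<gamma>)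
         - hyp1F1 (of_real \<gamma>) (2 * of_real \<gamma> + 1) (- \<i> * of_real a)
           * hyp1F1 (1 + of_real \<gamma>) (2 * of_real \<gamma> + 2) (\<i> * of_real a) * of_real \<gamma> = Ef (of_real a)"
  proof -
    have "hyp1F1 (1 + of_real \<gamma>) (2 * of_real \<gamma> + 1) (- \<i> * of_real a)
           * hyp1F1 (2 + of_real \<gamma>) (2 * of_real \<gamma> + 2) (\<i> * of_real a) * (1 + of_real \<gamma>)
       = hyp1F1 (1 + of_real \<gamma>) (2 * of_real \<gamma> + 1) (- \<i> * of_real a)
           * (hyp1F1 (2 + of_real \<gamma>) (2 * of_real \<gamma> + 2) (\<i> * of_real a) * (1 + of_real \<gamma>))"
      by (simp only: mult.assoc)
    also have "\<dots> = (Q (- \<i> * of_real a) + (- \<i> * of_real a) * Q2 (- \<i> * of_real a) / bc)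
        * (bc * Q (\<i> * of_real a) - gc * Q2 (\<i> * of_real a) + (\<i> * of_real a) * Q2 (\<i> * of_real a))"
      by (simp only: h1 h2)
    finally show ?thesis unfolding h3 h4 Ef_def by (simp add: gc_def algebra_simps)
  qed
  have "Ef (of_real a) \<noteq> 0"
  proof (cases a "0::real" rule: linorder_cases)
    case less
    have "Re (Ef (of_real (- a))) > 0" using less by (intro pos) simp
    hence "Ef (of_real (- a)) \<noteq> 0" by auto
    thus ?thesis using Ecnj[of "- a"] by auto
  next
    case equal thus ?thesis using E0 by simp
  next
    case greater
    from pos[OF greater] show ?thesis by auto
  qed
  thus ?thesis using T by simp
qed


end
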